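(* Let $\mathcal{X}=\{X_i,\mathcal{O}_i\}_{i\in\mathcal{I}}$ be a proper partition of $\mathbb{R}^n$ and $V\in\mathscr{P}(\mathcal{X})$. Then $V$ is nonpathological.
   Context: Proper partition $\{X_i,\mathcal{O}_i\}_{i\in\mathcal{I}}$, $\mathcal{I}=\{1,\dots,K\}$: closed $X_i$, open $\mathcal{O}_i$ with (a) $\bigcup_iX_i=\mathbb{R}^n$; (b) $X_i\subseteq\mathcal{O}_i$; (c) $\overline{\operatorname{int}(X_i)}=X_i$; (d) $\operatorname{bd}(X_i)$ has Lebesgue measure zero; (e) $X_i\cap X_j=\operatorname{bd}(X_i)\cap\operatorname{bd}(X_j)$ for $i\ne j$. $\mathscr{P}(\mathcal{X})$: continuous $V:\mathbb{R}^n\to\mathbb{R}$ for which there exist $V_i\in\mathcal{C}^1(\mathcal{O}_i,\mathbb{R})$ with $V(x)=V_i(x)$ for $x\in X_i$ (such $V$ is locally Lipschitz). Clarke generalized gradient: $\partial V(x)=\operatorname{co}\{\lim_k\nabla V(x_k):x_k\to x,\ x_k\notin\mathcal{N}_V\}$. A locally Lipschitz $V$ is nonpathological if for every absolutely continuous $\varphi:\mathbb{R}_+\to\mathbb{R}^n$, for almost every $t\in\mathbb{R}_+$ there exists $a_t\in\mathbb{R}$ with $\langle v,\dot\varphi(t)\rangle=a_t$ for all $v\in\partial V(\varphi(t))$. *)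

theory Defs
  imports "HOL-Analysis.Analysis"
begin

definition proper_partition :: "nat \<Rightarrow> (nat \<Rightarrow> 'a::euclidean_space set) \<Rightarrow> (nat \<Rightarrow> 'a set) \<Rightarrow> bool" where
  "proper_partition K X Op \<longleftrightarrow>
     (\<forall>i\<in>{1..K}. closed (X i) \<and> open (Op i)) \<and>
     (\<Union>i\<in>{1..K}. X i) = UNIV \<and>
     (\<forall>i\<in>{1..K}. X i \<subseteq> Op i) \<and>
     (\<forall>i\<in>{1..K}. closure (interior (X i)) = X i) \<and>
     (\<forall>i\<in>{1..K}. frontier (X i) \<in> null_sets lebesgue) \<and>
     (\<forall>i\<in>{1..K}. \<forall>j\<in>{1..K}. i \<noteq> j \<longrightarrow> X i \<inter> X j = frontier (X i) \<inter> frontier (X j))"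

definition C1_on :: "'a::euclidean_space set \<Rightarrow> ('a \<Rightarrow> real) \<Rightarrow> bool" where
  "C1_on S f \<longleftrightarrow> (\<exists>D. (\<forall>x\<in>S. (f has_derivative (\<lambda>h. D x \<bullet> h)) (at x)) \<and> continuous_on S D)"

definition piecewise_C1 :: "nat \<Rightarrow> (nat \<Rightarrow> 'a::euclidean_space set) \<Rightarrow> (nat \<Rightarrow> 'a set) \<Rightarrow> ('a \<Rightarrow> real) \<Rightarrow> bool" where
  "piecewise_C1 K X Op V \<longleftrightarrow> continuous_on UNIV V \<and>
     (\<exists>Vs. \<forall>i\<in>{1..K}. C1_on (Op i) (Vs i) \<and> (\<forall>x\<in>X i. V x = Vs i x))"

definition locally_lipschitz :: "('a::euclidean_space \<Rightarrow> real) \<Rightarrow> bool" where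
  "locally_lipschitz V \<longleftrightarrow> (\<forall>x. \<exists>e>0. \<exists>L. lipschitz_on L (ball x e) V)"

definition clarke_grad :: "('a::euclidean_space \<Rightarrow> real) \<Rightarrow> 'a \<Rightarrow> 'a set" where
  "clarke_grad V x = convex hull {g. \<exists>xs gs. (\<forall>k. (V has_derivative (\<lambda>h. gs k \<bullet> h)) (at (xs k)))
        \<and> xs \<longlonglongrightarrow> x \<and> gs \<longlonglongrightarrow> g}"

definition abs_cont_Rplus :: "(real \<Rightarrow> 'a::euclidean_space) \<Rightarrow> bool" where
  "abs_cont_Rplus \<phi> \<longleftrightarrow> (\<forall>b\<ge>0. \<forall>\<epsilon>>0. \<exists>\<delta>>0. \<forall>(n::nat) (a::nat \<Rightarrow> real) (c::nat \<Rightarrow> real).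
      (\<forall>k<n. 0 \<le> a k \<and> a k \<le> c k \<and> c k \<le> b) \<and>
      (\<forall>k<n. \<forall>l<n. k \<noteq> l \<longrightarrow> c k \<le> a l \<or> c l \<le> a k) \<and>
      (\<Sum>k<n. c k - a k) < \<delta>
      \<longrightarrow> (\<Sum>k<n. norm (\<phi> (c k) - \<phi> (a k))) < \<epsilon>)"

definition nonpathological :: "('a::euclidean_space \<Rightarrow> real) \<Rightarrow> bool" where
  "nonpathological V \<longleftrightarrow> locally_lipschitz V \<and>
     (\<forall>\<phi>. abs_cont_Rplus \<phi> \<longrightarrow>
        (AE t in lborel. 0 \<le> t \<longrightarrow>
           (\<forall>d. (\<phi> has_vector_derivative d) (at t) \<longrightarrow>
              (\<exists>a. \<forall>v\<in>clarke_grad V (\<phi> t). v \<bullet> d = a))))"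

end

theory Submission imports Defs begin

lemma countable_strict_max:
  fixes f :: "real \<Rightarrow> real"
  shows "countable {t. eventually (\<lambda>s. f s < f t) (at t)}"
proof -
  define S where "S = {t. eventually (\<lambda>s. f s < f t) (at t)}"
  define P where "P = (\<lambda>t (r::real\<times>real). fst r \<in> \<rat> \<and> snd r \<in> \<rat> \<and> fst r < t \<and> t < snd r \<and>
      (\<forall>s. fst r < s \<and> s < snd r \<and> s \<noteq> t \<longrightarrow> f s < f t))"
  have ex: "\<exists>r. P t r" if "t \<in> S" for t
  proof -
    from that obtain d where d: "d > 0" "\<And>s. s \<noteq> t \<Longrightarrow> dist s t < d \<Longrightarrow> f s < f t"
      unfolding S_def eventually_at by auto
    obtain r1 where r1: "r1 \<in> \<rat>" "t - d < r1" "r1 < t" using Rats_dense_in_real[of "t-d" t] d by auto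
    obtain r2 where r2: "r2 \<in> \<rat>" "t < r2" "r2 < t + d" using Rats_dense_in_real[of t "t+d"] d by auto
    have "f s < f t" if "r1 < s" "s < r2" "s \<noteq> t" for s
      using d(2)[of s] that r1 r2 by (simp add: dist_real_def abs_less_iff)
    then have "P t (r1, r2)" unfolding P_def using r1 r2 by simp
    then show ?thesis by blast
  qed
  define g where "g = (\<lambda>t. SOME r. P t r)"
  have g: "P t (g t)" if "t \<in> S" for t unfolding g_def using someI_ex[OF ex[OF that]] .
  have "inj_on g S"
  proof (rule inj_onI)
    fix t t' assume tt: "t \<in> S" "t' \<in> S" "g t = g t'"
    show "t = t'"
    proof (rule ccontr)
      assume ne: "t \<noteq> t'"
      have A: "fst (g t) < t'" "t' < snd (g t)" using g[OF tt(2)] tt(3) unfolding P_def by auto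
      have B: "fst (g t) < t" "t < snd (g t)" using g[OF tt(1)] unfolding P_def by auto
      have "f t' < f t" using g[OF tt(1)] A ne unfolding P_def by blast
      moreover have "f t < f t'" using g[OF tt(2)] B ne tt(3) unfolding P_def by metis
      ultimately show False by simp
    qed
  qed
  moreover have "g ` S \<subseteq> \<rat> \<times> \<rat>"
  proof
    fix r assume "r \<in> g ` S"
    then obtain t where "t \<in> S" "r = g t" by auto
    then show "r \<in> \<rat> \<times> \<rat>" using g[of t] unfolding P_def by (simp add: mem_Times_iff)
  qed
  then have "countable (g ` S)" by (rule countable_subset) (auto intro: countable_rat)
  ultimately show ?thesis unfolding S_def[symmetric] by (rule countable_image_inj_on[rotated])
qed


lemma tendsto_frequently_eq:
  fixes f :: "'b \<Rightarrow> 'a::metric_space"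
  assumes "(f \<longlongrightarrow> a) F" "frequently (\<lambda>x. f x = c) F"
  shows "a = c"
proof (rule ccontr)
  assume "a \<noteq> c"
  then have "eventually (\<lambda>x. f x \<noteq> c) F"
    using tendsto_imp_eventually_ne[OF assms(1)] by blast
  then show False using assms(2) unfolding frequently_def by simp
qed

lemma frequently_finite_ex:
  assumes "finite I" "frequently (\<lambda>x. \<exists>i\<in>I. Q i x) F"
  shows "\<exists>i\<in>I. frequently (Q i) F"
proof (rule ccontr)
  assume H: "\<not> (\<exists>i\<in>I. frequently (Q i) F)"
  have "\<forall>i\<in>I. eventually (\<lambda>x. \<not> Q i x) F"
  proof
    fix i assume "i\<in>I"
    with H have "\<not> frequently (Q i) F" by blast
    then show "eventually (\<lambda>x. \<not> Q i x) F" by (simp add: frequently_def)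
  qed
  then have "eventually (\<lambda>x. \<forall>i\<in>I. \<not> Q i x) F" by (rule eventually_ball_finite[OF assms(1)])
  then have "eventually (\<lambda>x. \<not> (\<exists>i\<in>I. Q i x)) F" by (rule eventually_mono) blast
  then show False using assms(2) unfolding frequently_def by simp
qed

lemma frequently_closed:
  assumes "closed S" "(f \<longlongrightarrow> l) F" "frequently (\<lambda>x. f x \<in> S) F"
  shows "l \<in> S"
proof (rule ccontr)
  assume "l \<notin> S"
  then have "eventually (\<lambda>x. f x \<in> -S) F"
    using assms(1,2) by (intro topological_tendstoD) auto
  then have "eventually (\<lambda>x. \<not> f x \<in> S) F" by simp
  then show False using assms(3) unfolding frequently_def by simp
qed

lemma grad_at_diff_point:
  fixes X Op :: "nat \<Rightarrow> 'a::euclidean_space set" and Vs :: "nat \<Rightarrow> 'a \<Rightarrow> real"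
    and D :: "nat \<Rightarrow> 'a \<Rightarrow> 'a" and V :: "'a \<Rightarrow> real"
  assumes fin: "finite I"
    and cl: "\<And>i. i\<in>I \<Longrightarrow> closed (X i)"
    and cover: "(\<Union>i\<in>I. X i) = UNIV"
    and sub: "\<And>i. i\<in>I \<Longrightarrow> X i \<subseteq> Op i"
    and eq: "\<And>i x. i\<in>I \<Longrightarrow> x\<in>X i \<Longrightarrow> V x = Vs i x"
    and der: "\<And>i x. i\<in>I \<Longrightarrow> x\<in>Op i \<Longrightarrow> (Vs i has_derivative (\<lambda>h. D i x \<bullet> h)) (at x)"
    and dV: "(V has_derivative (\<lambda>h. g \<bullet> h)) (at y)"
  shows "\<exists>i\<in>I. y \<in> X i \<and> g = D i y"
proof (rule ccontr)
  assume H: "\<not> ?thesis"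
  define A where "A = {i\<in>I. y \<in> X i}"
  have fa: "finite A" using fin unfolding A_def by auto
  have nz: "g - D i y \<noteq> 0" if "i \<in> A" for i using H that A_def by auto
  have "negligible (\<Union>((\<lambda>i. {x. (g - D i y) \<bullet> x = 0}) ` A))"
    by (rule negligible_Union) (auto simp: fa intro!: negligible_hyperplane nz)
  then have "(\<Union>((\<lambda>i. {x. (g - D i y) \<bullet> x = 0}) ` A)) \<noteq> UNIV" using non_negligible_UNIV by metis
  then obtain h where h: "\<And>i. i\<in>A \<Longrightarrow> (g - D i y) \<bullet> h \<noteq> 0" by blast
  have ev: "eventually (\<lambda>\<tau>. y + \<tau> *\<^sub>R h \<notin> X i) (at_right 0)" if i: "i \<in> I" for i
  proof (cases "y \<in> X i")
    case False
    have "((\<lambda>\<tau>::real. y + \<tau> *\<^sub>R h) \<longlongrightarrow> y + 0 *\<^sub>R h) (at_right 0)"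
      by (intro tendsto_intros)
    then have "((\<lambda>\<tau>::real. y + \<tau> *\<^sub>R h) \<longlongrightarrow> y) (at_right 0)" by simp
    then have "eventually (\<lambda>\<tau>. y + \<tau> *\<^sub>R h \<in> - X i) (at_right 0)"
      using False cl[OF i] by (intro topological_tendstoD) auto
    then show ?thesis by simp
  next
    case True
    then have iA: "i \<in> A" using i A_def by auto
    define w where "w = g - D i y"
    define \<phi> where "\<phi> = (\<lambda>\<tau>::real. V (y + \<tau> *\<^sub>R h) - Vs i (y + \<tau> *\<^sub>R h))"
    have l: "((\<lambda>\<tau>::real. y + \<tau> *\<^sub>R h) has_derivative (\<lambda>\<tau>. \<tau> *\<^sub>R h)) (at 0)"
      by (auto intro!: derivative_eq_intros)
    have "((\<lambda>z. V z - Vs i z) has_derivative (\<lambda>k. g \<bullet> k - D i y \<bullet> k)) (at y)"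
      using has_derivative_diff[OF dV der[OF i]] sub[OF i] True by auto
    then have d2: "((\<lambda>z. V z - Vs i z) has_derivative (\<lambda>k. w \<bullet> k)) (at (y + 0 *\<^sub>R h))"
      by (simp add: w_def inner_diff_left)
    have "(\<phi> has_derivative (\<lambda>\<tau>. w \<bullet> (\<tau> *\<^sub>R h))) (at 0)"
      using has_derivative_compose[OF l d2] unfolding \<phi>_def by simp
    moreover have "(\<lambda>\<tau>. w \<bullet> (\<tau> *\<^sub>R h)) = (*) (w \<bullet> h)" by (auto simp: mult.commute)
    ultimately have dphi: "(\<phi> has_real_derivative (w \<bullet> h)) (at 0)"
      by (simp add: has_field_derivative_def)
    have phi0: "\<phi> 0 = 0" unfolding \<phi>_def using eq[OF i True] by simp
    have wh: "w \<bullet> h \<noteq> 0" using h[OF iA] w_def by simp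
    have "\<exists>d>0. \<forall>t>0. t < d \<longrightarrow> \<phi> t \<noteq> 0"
    proof (cases "w \<bullet> h > 0")
      case True
      from DERIV_pos_inc_right[OF dphi True] show ?thesis using phi0
        by (metis add_0 less_irrefl)
    next
      case False
      then have "w \<bullet> h < 0" using wh by linarith
      from DERIV_neg_dec_right[OF dphi this] show ?thesis using phi0
        by (metis add_0 less_irrefl)
    qed
    then have "eventually (\<lambda>\<tau>. \<phi> \<tau> \<noteq> 0) (at_right 0)"
      unfolding eventually_at_right_field by auto
    then show ?thesis
    proof (rule eventually_mono)
      fix \<tau> assume "\<phi> \<tau> \<noteq> 0"
      then show "y + \<tau> *\<^sub>R h \<notin> X i" using eq[OF i, of "y + \<tau> *\<^sub>R h"] unfolding \<phi>_def by auto
    qed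
  qed
  have "\<forall>i\<in>I. eventually (\<lambda>\<tau>. y + \<tau> *\<^sub>R h \<notin> X i) (at_right (0::real))"
    using ev by blast
  then have "eventually (\<lambda>\<tau>. \<forall>i\<in>I. y + \<tau> *\<^sub>R h \<notin> X i) (at_right (0::real))"
    by (rule eventually_ball_finite[OF fin])
  then have "\<exists>\<tau>::real. \<forall>i\<in>I. y + \<tau> *\<^sub>R h \<notin> X i"
    using eventually_happens[of _ "at_right (0::real)"] by simp
  then obtain \<tau> :: real where tau: "\<forall>i\<in>I. y + \<tau> *\<^sub>R h \<notin> X i" by blast
  have "y + \<tau> *\<^sub>R h \<in> (\<Union>i\<in>I. X i)" using cover by simp
  then show False using tau by blast
qed

lemma clarke_sub:
  fixes X Op :: "nat \<Rightarrow> 'a::euclidean_space set" and Vs :: "nat \<Rightarrow> 'a \<Rightarrow> real"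
    and D :: "nat \<Rightarrow> 'a \<Rightarrow> 'a" and V :: "'a \<Rightarrow> real"
  assumes fin: "finite I"
    and cl: "\<And>i. i\<in>I \<Longrightarrow> closed (X i)"
    and op: "\<And>i. i\<in>I \<Longrightarrow> open (Op i)"
    and cover: "(\<Union>i\<in>I. X i) = UNIV"
    and sub: "\<And>i. i\<in>I \<Longrightarrow> X i \<subseteq> Op i"
    and eq: "\<And>i x. i\<in>I \<Longrightarrow> x\<in>X i \<Longrightarrow> V x = Vs i x"
    and der: "\<And>i x. i\<in>I \<Longrightarrow> x\<in>Op i \<Longrightarrow> (Vs i has_derivative (\<lambda>h. D i x \<bullet> h)) (at x)"
    and cont: "\<And>i. i\<in>I \<Longrightarrow> continuous_on (Op i) (D i)"
  shows "clarke_grad V x \<subseteq> convex hull {D i x | i. i\<in>I \<and> x \<in> X i}"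
  unfolding clarke_grad_def
proof (rule hull_mono, safe)
  fix g xs gs
  assume d: "\<forall>k. (V has_derivative (\<lambda>h. gs k \<bullet> h)) (at (xs k))" and xs: "xs \<longlonglongrightarrow> x" and gs: "gs \<longlonglongrightarrow> g"
  have "\<forall>k. \<exists>i\<in>I. xs k \<in> X i \<and> gs k = D i (xs k)"
  proof
    fix k
    show "\<exists>i\<in>I. xs k \<in> X i \<and> gs k = D i (xs k)"
      apply (rule grad_at_diff_point[where X=X and Op=Op and Vs=Vs and D=D and V=V and I=I])
      apply (rule fin)
      apply (erule cl)
      apply (rule cover)
      apply (erule sub)
      apply (erule (1) eq)
      apply (erule (1) der)
      apply (rule d[rule_format])
      done
  qed
  then have "frequently (\<lambda>k. \<exists>i\<in>I. xs k \<in> X i \<and> gs k = D i (xs k)) sequentially"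
    by (intro eventually_frequently) auto
  then obtain i where i: "i \<in> I" and fr: "frequently (\<lambda>k. xs k \<in> X i \<and> gs k = D i (xs k)) sequentially"
    using frequently_finite_ex[OF fin, of "\<lambda>i k. xs k \<in> X i \<and> gs k = D i (xs k)"] by blast
  have "frequently (\<lambda>k. xs k \<in> X i) sequentially" using fr by (rule frequently_elim1) simp
  then have xi: "x \<in> X i"
    by (rule frequently_closed[OF cl[OF i] xs])
  have "eventually (\<lambda>k. xs k \<in> Op i) sequentially"
    using xs op[OF i] sub[OF i] xi by (intro topological_tendstoD) auto
  then have "(\<lambda>k. D i (xs k)) \<longlonglongrightarrow> D i x"
    using continuous_on_tendsto_compose[OF cont[OF i] xs] sub[OF i] xi by auto
  then have "(\<lambda>k. gs k - D i (xs k)) \<longlonglongrightarrow> g - D i x" using gs by (intro tendsto_intros)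
  moreover have "frequently (\<lambda>k. gs k - D i (xs k) = 0) sequentially"
    using fr by (rule frequently_elim1) simp
  ultimately have "g - D i x = 0" by (rule tendsto_frequently_eq)
  then show "\<exists>j. g = D j x \<and> j \<in> I \<and> x \<in> X j" using i xi by auto
qed


lemma ac_cont:
  fixes \<phi> :: "real \<Rightarrow> 'a::euclidean_space"
  assumes "abs_cont_Rplus \<phi>"
  shows "continuous_on {0<..} \<phi>"
proof (rule continuous_at_imp_continuous_on, rule ballI)
  fix s0 :: real assume "s0 \<in> {0<..}"
  then have s0: "s0 > 0" by simp
  show "isCont \<phi> s0" unfolding continuous_at_eps_delta
  proof (intro allI impI)
    fix e :: real assume e: "e > 0"
    have b0: "s0 + 1 \<ge> 0" using s0 by simp
    have "\<exists>\<delta>>0. \<forall>(n::nat) (a::nat \<Rightarrow> real) (c::nat \<Rightarrow> real).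
      (\<forall>k<n. 0 \<le> a k \<and> a k \<le> c k \<and> c k \<le> s0 + 1) \<and>
      (\<forall>k<n. \<forall>l<n. k \<noteq> l \<longrightarrow> c k \<le> a l \<or> c l \<le> a k) \<and>
      (\<Sum>k<n. c k - a k) < \<delta>
      \<longrightarrow> (\<Sum>k<n. norm (\<phi> (c k) - \<phi> (a k))) < e"
      using assms unfolding abs_cont_Rplus_def using b0 e by (elim allE impE) 
    then obtain \<delta> where \<delta>all: "\<delta> > 0 \<and> (\<forall>(n::nat) (a::nat \<Rightarrow> real) (c::nat \<Rightarrow> real).
      (\<forall>k<n. 0 \<le> a k \<and> a k \<le> c k \<and> c k \<le> s0 + 1) \<and>
      (\<forall>k<n. \<forall>l<n. k \<noteq> l \<longrightarrow> c k \<le> a l \<or> c l \<le> a k) \<and>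
      (\<Sum>k<n. c k - a k) < \<delta>
      \<longrightarrow> (\<Sum>k<n. norm (\<phi> (c k) - \<phi> (a k))) < e)" by (rule exE)
    have \<delta>: "\<delta> > 0" using \<delta>all by (rule conjunct1)
    have Hall: "\<forall>(n::nat) (a::nat \<Rightarrow> real) (c::nat \<Rightarrow> real).
      (\<forall>k<n. 0 \<le> a k \<and> a k \<le> c k \<and> c k \<le> s0 + 1) \<and>
      (\<forall>k<n. \<forall>l<n. k \<noteq> l \<longrightarrow> c k \<le> a l \<or> c l \<le> a k) \<and>
      (\<Sum>k<n. c k - a k) < \<delta>
      \<longrightarrow> (\<Sum>k<n. norm (\<phi> (c k) - \<phi> (a k))) < e" using \<delta>all by (rule conjunct2)
    define d where "d = min \<delta> (min s0 1)"
    have "d > 0" using \<delta> s0 by (simp add: d_def)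
    moreover have "dist (\<phi> s) (\<phi> s0) < e" if "dist s s0 < d" for s
    proof -
      have hs: "\<bar>s - s0\<bar> < d" using that by (simp add: dist_real_def)
      have 1: "\<forall>k<(1::nat). 0 \<le> (\<lambda>_. min s s0) k \<and> (\<lambda>_. min s s0) k \<le> (\<lambda>_. max s s0) k \<and> (\<lambda>_. max s s0) k \<le> s0 + 1"
        using hs s0 unfolding d_def by auto
      have 2: "\<forall>k<(1::nat). \<forall>l<(1::nat). k \<noteq> l \<longrightarrow> (\<lambda>_. max s s0) k \<le> (\<lambda>_. min s s0) l \<or> (\<lambda>_. max s s0) l \<le> (\<lambda>_. min s s0) k"
        by (intro allI impI) (simp add: less_one)
      have 3: "(\<Sum>k<(1::nat). (\<lambda>_. max s s0) k - (\<lambda>_. min s s0) k) < \<delta>"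
        using hs unfolding d_def by auto
      have "(\<Sum>k<(1::nat). norm (\<phi> ((\<lambda>_. max s s0) k) - \<phi> ((\<lambda>_. min s s0) k))) < e"
        using mp[OF spec[OF spec[OF spec[OF Hall, of 1], of "\<lambda>_. min s s0"], of "\<lambda>_. max s s0"] conjI[OF 1 conjI[OF 2 3]]] .
      then have "norm (\<phi> (max s s0) - \<phi> (min s s0)) < e" by simp
      then show ?thesis
        by (cases "s \<le> s0") (auto simp: dist_norm norm_minus_commute max_def min_def)
    qed
    ultimately show "\<exists>d>0. \<forall>s. dist s s0 < d \<longrightarrow> dist (\<phi> s) (\<phi> s0) < e" by blast
  qed
qed

lemma loc_lip:
  fixes X Op :: "nat \<Rightarrow> 'a::euclidean_space set" and Vs :: "nat \<Rightarrow> 'a \<Rightarrow> real"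
    and D :: "nat \<Rightarrow> 'a \<Rightarrow> 'a" and V :: "'a \<Rightarrow> real"
  assumes fin: "finite I"
    and cl: "\<And>i. i\<in>I \<Longrightarrow> closed (X i)"
    and op: "\<And>i. i\<in>I \<Longrightarrow> open (Op i)"
    and cover: "(\<Union>i\<in>I. X i) = UNIV"
    and sub: "\<And>i. i\<in>I \<Longrightarrow> X i \<subseteq> Op i"
    and eq: "\<And>i x. i\<in>I \<Longrightarrow> x\<in>X i \<Longrightarrow> V x = Vs i x"
    and der: "\<And>i x. i\<in>I \<Longrightarrow> x\<in>Op i \<Longrightarrow> (Vs i has_derivative (\<lambda>h. D i x \<bullet> h)) (at x)"
    and cont: "\<And>i. i\<in>I \<Longrightarrow> continuous_on (Op i) (D i)"
  shows "locally_lipschitz V"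
  unfolding locally_lipschitz_def
proof
  fix x :: 'a
  define A where "A = {i\<in>I. x \<in> X i}"
  have finA: "finite A" using fin unfolding A_def by simp
  have evr: "eventually (\<lambda>r. (i \<in> A \<longrightarrow> cball x r \<subseteq> Op i) \<and> (i \<notin> A \<longrightarrow> ball x r \<inter> X i = {})) (at_right (0::real))"
    if i: "i \<in> I" for i
  proof (cases "i \<in> A")
    case True
    then have "x \<in> Op i" using sub[OF i] A_def by auto
    then obtain e where e: "e > 0" "cball x e \<subseteq> Op i" using open_contains_cball op[OF i] by blast
    have "\<forall>r>0. r < e \<longrightarrow> cball x r \<subseteq> Op i" using e by (meson order.trans less_imp_le subset_cball)
    then show ?thesis using True e(1) unfolding eventually_at_right_field by blast
  next
    case False
    then have "x \<in> - X i" using i A_def by auto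
    then obtain e where e: "e > 0" "ball x e \<subseteq> - X i" using open_contains_ball cl[OF i] by (metis open_Compl)
    have "\<forall>r>0. r < e \<longrightarrow> ball x r \<inter> X i = {}" using e by (auto simp: subset_eq)
    then show ?thesis using False e(1) unfolding eventually_at_right_field by blast
  qed
  have "\<forall>i\<in>I. eventually (\<lambda>r. (i \<in> A \<longrightarrow> cball x r \<subseteq> Op i) \<and> (i \<notin> A \<longrightarrow> ball x r \<inter> X i = {})) (at_right (0::real))"
    using evr by blast
  then have "eventually (\<lambda>r. \<forall>i\<in>I. (i \<in> A \<longrightarrow> cball x r \<subseteq> Op i) \<and> (i \<notin> A \<longrightarrow> ball x r \<inter> X i = {})) (at_right (0::real))"
    by (rule eventually_ball_finite[OF fin])
  moreover have "eventually (\<lambda>r. 0 < r) (at_right (0::real))" by (rule eventually_at_right_less)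
  ultimately have "eventually (\<lambda>r. 0 < r \<and> (\<forall>i\<in>I. (i \<in> A \<longrightarrow> cball x r \<subseteq> Op i) \<and> (i \<notin> A \<longrightarrow> ball x r \<inter> X i = {}))) (at_right (0::real))"
    by (rule eventually_conj[rotated])
  then have "\<exists>r. 0 < r \<and> (\<forall>i\<in>I. (i \<in> A \<longrightarrow> cball x r \<subseteq> Op i) \<and> (i \<notin> A \<longrightarrow> ball x r \<inter> X i = {}))"
    using eventually_happens[of _ "at_right (0::real)"] by simp
  then obtain r where r: "r > 0" and rA: "\<And>i. i \<in> A \<Longrightarrow> cball x r \<subseteq> Op i"
    and rN: "\<And>i. i \<in> I \<Longrightarrow> i \<notin> A \<Longrightarrow> ball x r \<inter> X i = {}"
    using A_def by auto
  have AI: "A \<subseteq> I" unfolding A_def by auto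
  have bnd: "bounded (\<Union>i\<in>A. D i ` cball x r)"
  proof (rule bounded_UN[OF finA], rule ballI)
    fix i assume iA: "i \<in> A"
    have "continuous_on (cball x r) (D i)" using cont[of i] iA AI rA[OF iA] continuous_on_subset by blast
    then show "bounded (D i ` cball x r)" by (intro compact_imp_bounded compact_continuous_image) auto
  qed
  then obtain M where M: "M > 0" "\<And>i y. i \<in> A \<Longrightarrow> y \<in> cball x r \<Longrightarrow> norm (D i y) \<le> M"
    unfolding bounded_pos by blast
  have lipA: "M-lipschitz_on (ball x r) (Vs i)" if iA: "i \<in> A" for i
  proof (rule bounded_derivative_imp_lipschitz)
    fix y assume y: "y \<in> ball x r"
    then have "y \<in> Op i" using rA[OF iA] by auto
    then show "(Vs i has_derivative (\<lambda>h. D i y \<bullet> h)) (at y within ball x r)"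
      using der[of i y] iA AI by (auto intro: has_derivative_at_withinI)
    have "onorm (\<lambda>h. D i y \<bullet> h) \<le> norm (D i y)"
      using onorm_inner_right[OF bounded_linear_ident, of "D i y"] by (simp add: onorm_id)
    also have "\<dots> \<le> M" using M(2)[OF iA] y by auto
    finally show "onorm (\<lambda>h. D i y \<bullet> h) \<le> M" .
  qed (use M in auto)
  have "M-lipschitz_on (ball x r) V"
  proof (rule lipschitz_onI)
    fix y z assume y: "y \<in> ball x r" and z: "z \<in> ball x r"
    define \<gamma> where "\<gamma> = (\<lambda>\<tau>::real. y + \<tau> *\<^sub>R (z - y))"
    have g01: "\<gamma> \<tau> \<in> ball x r" if "\<tau> \<in> {0..1}" for \<tau>
    proof -
      have "\<gamma> \<tau> = (1 - \<tau>) *\<^sub>R y + \<tau> *\<^sub>R z" unfolding \<gamma>_def by (simp add: algebra_simps)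
      then show ?thesis using convex_ball[of x r] y z that unfolding convex_def by auto
    qed
    have contg: "continuous_on UNIV \<gamma>" unfolding \<gamma>_def by (intro continuous_intros)
    define U where "U = (\<lambda>i. {\<tau>. \<gamma> \<tau> \<in> X i} \<inter> {0..1})"
    have "(M * dist y z)-lipschitz_on {0..1} (\<lambda>\<tau>. V (\<gamma> \<tau>))"
    proof (rule lipschitz_on_closed_Union[where I=A and U=U])
      fix i assume iA: "i \<in> A"
      then have iI: "i \<in> I" using AI by auto
      have "closed (\<gamma> -` X i)" using closed_vimage[OF cl[OF iI] contg] .
      moreover have "{\<tau>. \<gamma> \<tau> \<in> X i} = \<gamma> -` X i" by auto
      ultimately show "closed (U i)" unfolding U_def by (intro closed_Int) auto
      show "(M * dist y z)-lipschitz_on (U i) (\<lambda>\<tau>. V (\<gamma> \<tau>))"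
      proof (rule lipschitz_onI)
        fix s t assume s: "s \<in> U i" and t: "t \<in> U i"
        have "V (\<gamma> s) = Vs i (\<gamma> s)" "V (\<gamma> t) = Vs i (\<gamma> t)" using s t eq[OF iI] unfolding U_def by auto
        then have "dist (V (\<gamma> s)) (V (\<gamma> t)) = dist (Vs i (\<gamma> s)) (Vs i (\<gamma> t))" by simp
        also have "\<dots> \<le> M * dist (\<gamma> s) (\<gamma> t)"
          using lipschitz_onD[OF lipA[OF iA], of "\<gamma> s" "\<gamma> t"] g01 s t unfolding U_def by auto
        also have "dist (\<gamma> s) (\<gamma> t) = \<bar>s - t\<bar> * dist y z"
        proof -
          have "\<gamma> s - \<gamma> t = (s - t) *\<^sub>R (z - y)" unfolding \<gamma>_def by (simp add: algebra_simps)
          then show ?thesis by (simp add: dist_norm norm_minus_commute)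
        qed
        finally show "dist (V (\<gamma> s)) (V (\<gamma> t)) \<le> M * dist y z * dist s t"
          by (simp add: dist_real_def mult_ac)
      qed (use M in auto)
    next
      show "finite A" by (rule finA)
      show "0 \<le> M * dist y z" using M by simp
      show "{0..1} \<subseteq> (\<Union>i\<in>A. U i)"
      proof
        fix \<tau> :: real assume \<tau>: "\<tau> \<in> {0..1}"
        have "\<gamma> \<tau> \<in> (\<Union>i\<in>I. X i)" using cover by simp
        then obtain i where i: "i \<in> I" "\<gamma> \<tau> \<in> X i" by blast
        have "i \<in> A"
        proof (rule ccontr)
          assume "i \<notin> A"
          then have "ball x r \<inter> X i = {}" by (rule rN[OF i(1)])
          then show False using g01[OF \<tau>] i(2) by blast
        qed
        then show "\<tau> \<in> (\<Union>i\<in>A. U i)" using i \<tau> unfolding U_def by blast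
      qed
    qed
    then have "dist (V (\<gamma> 1)) (V (\<gamma> 0)) \<le> M * dist y z * dist (1::real) 0"
      by (rule lipschitz_onD) auto
    then show "dist (V y) (V z) \<le> M * dist y z"
      unfolding \<gamma>_def by (simp add: dist_commute)
  qed (use M in auto)
  then show "\<exists>e>0. \<exists>L. L-lipschitz_on (ball x e) V" using r by blast
qed


lemma dq1: fixes A s t q :: real shows "s > t \<Longrightarrow> A / (s - t) - q < 0 \<Longrightarrow> A < q * (s - t)"
  by (simp add: pos_divide_less_eq)
lemma dq2: fixes A s t q :: real shows "s < t \<Longrightarrow> A / (s - t) - q > 0 \<Longrightarrow> A < q * (s - t)"
  by (simp add: neg_less_divide_eq)
lemma dq3: fixes A s t q :: real shows "s > t \<Longrightarrow> A / (s - t) - q > 0 \<Longrightarrow> A > q * (s - t)"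
  by (simp add: pos_less_divide_eq)
lemma dq4: fixes A s t q :: real shows "s < t \<Longrightarrow> A / (s - t) - q < 0 \<Longrightarrow> A > q * (s - t)"
  by (simp add: neg_divide_less_eq)

lemma sign_const:
  fixes P :: "real \<Rightarrow> real"
  assumes "continuous_on S P" "connected S" "\<forall>s\<in>S. P s \<noteq> 0"
  shows "(\<forall>s\<in>S. P s > 0) \<or> (\<forall>s\<in>S. P s < 0)"
proof (rule ccontr)
  assume "\<not> ?thesis"
  then obtain s1 s2 where s: "s1 \<in> S" "s2 \<in> S" "P s1 \<le> 0" "P s2 \<ge> 0" by force
  have "connected (P ` S)" by (rule connected_continuous_image[OF assms(1,2)])
  then have "0 \<in> P ` S" using s by (intro connectedD_interval[of "P ` S" "P s1" "P s2" 0]) auto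
  then show False using assms(3) by auto
qed

lemma freq_split:
  fixes t :: real
  assumes "frequently Q (at t)"
  shows "frequently Q (at_left t) \<or> frequently Q (at_right t)"
  using assms unfolding frequently_def eventually_at_split by blast

lemma freq_contra:
  assumes "frequently Q F" "eventually (\<lambda>s. Q s \<longrightarrow> R s) F" "eventually (\<lambda>s. \<not> R s) F"
  shows False
proof -
  have "eventually (\<lambda>s. \<not> Q s) F" using assms(2,3) by (rule eventually_elim2) blast
  then show False using assms(1) unfolding frequently_def by simp
qed

lemma ae_part:
  fixes X Op :: "nat \<Rightarrow> 'a::euclidean_space set" and Vs :: "nat \<Rightarrow> 'a \<Rightarrow> real"
    and D :: "nat \<Rightarrow> 'a \<Rightarrow> 'a" and V :: "'a \<Rightarrow> real" and \<phi> :: "real \<Rightarrow> 'a"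
  assumes fin: "finite I"
    and cl: "\<And>i. i\<in>I \<Longrightarrow> closed (X i)"
    and op: "\<And>i. i\<in>I \<Longrightarrow> open (Op i)"
    and cover: "(\<Union>i\<in>I. X i) = UNIV"
    and sub: "\<And>i. i\<in>I \<Longrightarrow> X i \<subseteq> Op i"
    and eq: "\<And>i x. i\<in>I \<Longrightarrow> x\<in>X i \<Longrightarrow> V x = Vs i x"
    and der: "\<And>i x. i\<in>I \<Longrightarrow> x\<in>Op i \<Longrightarrow> (Vs i has_derivative (\<lambda>h. D i x \<bullet> h)) (at x)"
    and cont: "\<And>i. i\<in>I \<Longrightarrow> continuous_on (Op i) (D i)"
    and cV: "continuous_on UNIV V"
    and cphi: "continuous_on {0<..} \<phi>"
  shows "AE t in lborel. 0 \<le> t \<longrightarrow> (\<forall>d. (\<phi> has_vector_derivative d) (at t) \<longrightarrow>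
              (\<exists>a. \<forall>v\<in>clarke_grad V (\<phi> t). v \<bullet> d = a))"
proof -
  define F where "F = (\<lambda>s. V (\<phi> s))"
  define ind where "ind = (\<lambda>k s. if \<phi> s \<in> X k then 1 else (0::real))"
  define SM where "SM = (\<lambda>f::real\<Rightarrow>real. {t. eventually (\<lambda>s. f s < f t) (at t)})"
  define N where "N = {0} \<union> (\<Union>k\<in>I. SM (ind k)) \<union>
      (\<Union>q\<in>\<rat>. SM (\<lambda>s. F s - q * s) \<union> SM (\<lambda>s. - (F s - q * s)))"
  have cSM: "countable (SM f)" for f unfolding SM_def by (rule countable_strict_max)
  have cN: "countable N" unfolding N_def
  proof (intro countable_Un)
    show "countable {0::real}" by simp
    show "countable (\<Union>k\<in>I. SM (ind k))" by (intro countable_UN[OF countable_finite[OF fin]] cSM)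
    show "countable (\<Union>q\<in>\<rat>. SM (\<lambda>s. F s - q * s) \<union> SM (\<lambda>s. - (F s - q * s)))"
      by (intro countable_UN[OF countable_rat] countable_Un cSM)
  qed
  have contF: "continuous_on {0<..} F"
    unfolding F_def by (rule continuous_on_compose2[OF cV cphi]) auto
  have main: "t \<in> N" if "\<not> (0 \<le> t \<longrightarrow> (\<forall>d. (\<phi> has_vector_derivative d) (at t) \<longrightarrow>
              (\<exists>a. \<forall>v\<in>clarke_grad V (\<phi> t). v \<bullet> d = a)))" for t
  proof (rule ccontr)
    assume tN: "t \<notin> N"
    from that obtain d where t0: "0 \<le> t" and hd: "(\<phi> has_vector_derivative d) (at t)"
      and nex: "\<not> (\<exists>a. \<forall>v\<in>clarke_grad V (\<phi> t). v \<bullet> d = a)" by blast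
    have tpos: "t > 0" using t0 tN unfolding N_def by (cases "t = 0") auto
    have notSM: "t \<notin> SM f" if "f = ind k \<and> k \<in> I \<or> (\<exists>q\<in>\<rat>. f = (\<lambda>s. F s - q * s) \<or> f = (\<lambda>s. - (F s - q * s)))" for f k
      using tN that unfolding N_def by blast
    define x where "x = \<phi> t"
    define a where "a = (\<lambda>k. D k x \<bullet> d)"
    have notall: "\<not> (\<exists>c. \<forall>k\<in>I. x \<in> X k \<longrightarrow> a k = c)"
    proof
      assume "\<exists>c. \<forall>k\<in>I. x \<in> X k \<longrightarrow> a k = c"
      then obtain c where c: "\<And>k. k \<in> I \<Longrightarrow> x \<in> X k \<Longrightarrow> a k = c" by blast
      have "{D i x | i. i\<in>I \<and> x \<in> X i} \<subseteq> {v. d \<bullet> v = c}" using c unfolding a_def by (auto simp: inner_commute)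
      then have "convex hull {D i x | i. i\<in>I \<and> x \<in> X i} \<subseteq> {v. d \<bullet> v = c}"
        by (rule hull_minimal) (rule convex_hyperplane)
      moreover have "clarke_grad V x \<subseteq> convex hull {D i x | i. i\<in>I \<and> x \<in> X i}"
        by (rule clarke_sub[where X=X and Op=Op and Vs=Vs and D=D and V=V and I=I])
          (fact fin, erule cl, erule op, fact cover, erule sub, erule (1) eq, erule (1) der, erule cont)
      ultimately have "\<forall>v\<in>clarke_grad V (\<phi> t). v \<bullet> d = c" unfolding x_def by (auto simp: inner_commute)
      then show False using nex by blast
    qed
    define Act where "Act = {k\<in>I. x \<in> X k}"
    define AV where "AV = a ` Act"
    have finAV: "finite AV" unfolding AV_def Act_def using fin by simp
    have "x \<in> (\<Union>i\<in>I. X i)" using cover by simp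
    then have "Act \<noteq> {}" unfolding Act_def by blast
    then have AVne: "AV \<noteq> {}" unfolding AV_def by simp
    define amax where "amax = Max AV"
    have amax_ge: "a k \<le> amax" if "k \<in> Act" for k
      unfolding amax_def using finAV that AV_def by (intro Max_ge) auto
    have "amax \<in> AV" unfolding amax_def using finAV AVne by (rule Max_in)
    then obtain j where j: "j \<in> Act" "a j = amax" unfolding AV_def by auto
    have "\<exists>k\<in>Act. a k < amax"
    proof (rule ccontr)
      assume "\<not> ?thesis"
      then have "\<forall>k\<in>I. x \<in> X k \<longrightarrow> a k = amax" using amax_ge unfolding Act_def by force
      then show False using notall by blast
    qed
    then have LOne: "{v\<in>AV. v < amax} \<noteq> {}" unfolding AV_def by auto
    define alo where "alo = Max {v\<in>AV. v < amax}"
    have "alo \<in> {v\<in>AV. v < amax}" unfolding alo_def using finAV LOne by (intro Max_in) auto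
    then obtain i where i: "i \<in> Act" "a i = alo" and alo_lt: "alo < amax" unfolding AV_def by auto
    have gap: "a k \<le> alo" if "k \<in> Act" "a k < amax" for k
      unfolding alo_def using finAV that AV_def by (intro Max_ge) auto
    obtain q where q: "q \<in> \<rat>" "alo < q" "q < amax" using Rats_dense_in_real[OF alo_lt] by blast
    have ct: "(\<phi> \<longlongrightarrow> x) (at t)"
      using has_vector_derivative_continuous[OF hd] unfolding x_def continuous_at by simp
    have hd': "(\<phi> has_derivative (\<lambda>h. h *\<^sub>R d)) (at t)" using hd by (simp add: has_vector_derivative_def)
    have DQ: "((\<lambda>s. (Vs k (\<phi> s) - Vs k x) / (s - t)) \<longlongrightarrow> a k) (at t)" if k: "k \<in> Act" for k
    proof -
      have kI: "k \<in> I" and xk: "x \<in> X k" using k unfolding Act_def by auto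
      have dk: "(Vs k has_derivative (\<lambda>h. D k x \<bullet> h)) (at (\<phi> t))"
        using der[OF kI] sub[OF kI] xk unfolding x_def by auto
      have "((\<lambda>s. Vs k (\<phi> s)) has_derivative (\<lambda>h. D k x \<bullet> (h *\<^sub>R d))) (at t)"
        using has_derivative_compose[OF hd' dk] unfolding x_def by simp
      moreover have "(\<lambda>h. D k x \<bullet> (h *\<^sub>R d)) = (*) (a k)" unfolding a_def by (auto simp: mult.commute)
      ultimately have "((\<lambda>s. Vs k (\<phi> s)) has_real_derivative a k) (at t)"
        by (simp add: has_field_derivative_def)
      then show ?thesis unfolding has_field_derivative_iff x_def by simp
    qed
    have rel: "F s - F t = Vs k (\<phi> s) - Vs k x" if "k \<in> Act" "\<phi> s \<in> X k" for k s
      using that eq[of k] unfolding F_def Act_def x_def by auto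
    define P where "P = (\<lambda>s. (F s - F t) / (s - t) - q)"
    have freq: "frequently (\<lambda>s. \<phi> s \<in> X k) (at t)" if k: "k \<in> Act" for k
    proof (rule ccontr)
      assume "\<not> ?thesis"
      then have "eventually (\<lambda>s. \<phi> s \<notin> X k) (at t)" unfolding frequently_def by simp
      then have "eventually (\<lambda>s. ind k s < ind k t) (at t)"
        by (rule eventually_mono) (use k in \<open>auto simp: ind_def Act_def x_def\<close>)
      then have "t \<in> SM (ind k)" unfolding SM_def by simp
      moreover have "t \<notin> SM (ind k)" by (rule notSM[of _ k]) (use k Act_def in auto)
      ultimately show False by simp
    qed
    have claim1: "eventually (\<lambda>s. P s \<noteq> 0) (at t)"
    proof (rule ccontr)
      assume "\<not> ?thesis"
      then have "frequently (\<lambda>s. P s = 0) (at t)" unfolding frequently_def by simp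
      then have "frequently (\<lambda>s. \<exists>k\<in>I. \<phi> s \<in> X k \<and> P s = 0) (at t)"
      proof (rule frequently_elim1)
        fix s assume "P s = 0"
        have "\<phi> s \<in> (\<Union>i\<in>I. X i)" using cover by simp
        then show "\<exists>k\<in>I. \<phi> s \<in> X k \<and> P s = 0" using \<open>P s = 0\<close> by blast
      qed
      then obtain k where kI: "k \<in> I" and fk: "frequently (\<lambda>s. \<phi> s \<in> X k \<and> P s = 0) (at t)"
        using frequently_finite_ex[OF fin, of "\<lambda>k s. \<phi> s \<in> X k \<and> P s = 0"] by blast
      have "frequently (\<lambda>s. \<phi> s \<in> X k) (at t)" using fk by (rule frequently_elim1) simp
      then have "x \<in> X k" by (rule frequently_closed[OF cl[OF kI] ct])
      then have kA: "k \<in> Act" using kI unfolding Act_def by simp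
      have "frequently (\<lambda>s. (Vs k (\<phi> s) - Vs k x) / (s - t) = q) (at t)"
      proof (rule frequently_elim1[OF fk])
        fix s assume s: "\<phi> s \<in> X k \<and> P s = 0"
        then show "(Vs k (\<phi> s) - Vs k x) / (s - t) = q" using rel[OF kA, of s] unfolding P_def by simp
      qed
      then have "a k = q" by (rule tendsto_frequently_eq[OF DQ[OF kA]])
      then show False using gap[OF kA] q by linarith
    qed
    then obtain \<delta> where \<delta>: "\<delta> > 0" and hP: "\<And>s. s \<noteq> t \<Longrightarrow> dist s t < \<delta> \<Longrightarrow> P s \<noteq> 0"
      unfolding eventually_at by auto
    define e where "e = min \<delta> t"
    have e: "e > 0" "e \<le> t" "e \<le> \<delta>" using \<delta> tpos unfolding e_def by auto
    have contP: "continuous_on S P" if "S \<subseteq> {0<..} - {t}" for S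
    proof -
      have "continuous_on S F" using contF that continuous_on_subset by blast
      moreover have "\<forall>s\<in>S. s - t \<noteq> 0" using that by auto
      ultimately show ?thesis unfolding P_def by (intro continuous_intros) auto
    qed
    have Rsign: "(\<forall>s\<in>{t<..<t+e}. P s > 0) \<or> (\<forall>s\<in>{t<..<t+e}. P s < 0)"
    proof (rule sign_const)
      show "continuous_on {t<..<t+e} P" using tpos by (intro contP) auto
      show "connected {t<..<t+e}" by simp
      show "\<forall>s\<in>{t<..<t+e}. P s \<noteq> 0" using hP e by (auto simp: dist_real_def)
    qed
    have Lsign: "(\<forall>s\<in>{t-e<..<t}. P s > 0) \<or> (\<forall>s\<in>{t-e<..<t}. P s < 0)"
    proof (rule sign_const)
      show "continuous_on {t-e<..<t} P" using e by (intro contP) auto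
      show "connected {t-e<..<t}" by simp
      show "\<forall>s\<in>{t-e<..<t}. P s \<noteq> 0" using hP e by (auto simp: dist_real_def)
    qed
    have evR: "eventually R (at_right t)" if "\<forall>s\<in>{t<..<t+e}. R s" for R
      unfolding eventually_at_right_field using that e by (intro exI[of _ "t+e"]) auto
    have evL: "eventually R (at_left t)" if "\<forall>s\<in>{t-e<..<t}. R s" for R
      unfolding eventually_at_left_field using that e by (intro exI[of _ "t-e"]) auto
    have c3i: "eventually (\<lambda>s. \<phi> s \<in> X i \<longrightarrow> P s < 0) (at t)"
    proof -
      have "eventually (\<lambda>s. (Vs i (\<phi> s) - Vs i x) / (s - t) < q) (at t)"
        using order_tendstoD(2)[OF DQ[OF i(1)]] i(2) q(2) by simp
      then show ?thesis by (rule eventually_mono) (use rel[OF i(1)] in \<open>auto simp: P_def\<close>)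
    qed
    have c3j: "eventually (\<lambda>s. \<phi> s \<in> X j \<longrightarrow> P s > 0) (at t)"
    proof -
      have "eventually (\<lambda>s. (Vs j (\<phi> s) - Vs j x) / (s - t) > q) (at t)"
        using order_tendstoD(1)[OF DQ[OF j(1)]] j(2) q(3) by simp
      then show ?thesis by (rule eventually_mono) (use rel[OF j(1)] in \<open>auto simp: P_def\<close>)
    qed
    have c3iR: "eventually (\<lambda>s. \<phi> s \<in> X i \<longrightarrow> P s < 0) (at_right t)"
      and c3iL: "eventually (\<lambda>s. \<phi> s \<in> X i \<longrightarrow> P s < 0) (at_left t)"
      using c3i unfolding eventually_at_split by auto
    have c3jR: "eventually (\<lambda>s. \<phi> s \<in> X j \<longrightarrow> P s > 0) (at_right t)"
      and c3jL: "eventually (\<lambda>s. \<phi> s \<in> X j \<longrightarrow> P s > 0) (at_left t)"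
      using c3j unfolding eventually_at_split by auto
    have qQ: "q \<in> \<rat>" by (rule q(1))
    show False
    proof (cases "frequently (\<lambda>s. \<phi> s \<in> X i) (at_right t)")
      case iR: True
      have Rneg: "\<forall>s\<in>{t<..<t+e}. P s < 0"
      proof (rule ccontr)
        assume "\<not> ?thesis"
        then have "\<forall>s\<in>{t<..<t+e}. \<not> P s < 0" using Rsign by auto
        then show False using freq_contra[OF iR c3iR evR] by blast
      qed
      have jL: "frequently (\<lambda>s. \<phi> s \<in> X j) (at_left t)"
      proof (rule ccontr)
        assume "\<not> ?thesis"
        then have jR: "frequently (\<lambda>s. \<phi> s \<in> X j) (at_right t)" using freq_split[OF freq[OF j(1)]] by blast
        have "\<forall>s\<in>{t<..<t+e}. \<not> P s > 0" using Rneg by auto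
        then show False using freq_contra[OF jR c3jR evR] by blast
      qed
      have Lpos: "\<forall>s\<in>{t-e<..<t}. P s > 0"
      proof (rule ccontr)
        assume "\<not> ?thesis"
        then have "\<forall>s\<in>{t-e<..<t}. \<not> P s > 0" using Lsign by auto
        then show False using freq_contra[OF jL c3jL evL] by blast
      qed
      have "eventually (\<lambda>s. F s - q * s < F t - q * t) (at t)"
        unfolding eventually_at
      proof (intro exI[of _ e] conjI ballI impI)
        show "e > 0" by (rule e(1))
        fix s assume "s \<in> UNIV" and s: "s \<noteq> t \<and> dist s t < e"
        show "F s - q * s < F t - q * t"
        proof (cases "s > t")
          case True
          then have "P s < 0" using Rneg s by (auto simp: dist_real_def)
          then have "F s - F t < q * (s - t)" using dq1[OF True] unfolding P_def by blast
          then show ?thesis by (simp add: algebra_simps)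
        next
          case False
          then have st: "s < t" using s by auto
          then have "P s > 0" using Lpos s by (auto simp: dist_real_def)
          then have "F s - F t < q * (s - t)" using dq2[OF st] unfolding P_def by blast
          then show ?thesis by (simp add: algebra_simps)
        qed
      qed
      then have "t \<in> SM (\<lambda>s. F s - q * s)" unfolding SM_def by simp
      moreover have "t \<notin> SM (\<lambda>s. F s - q * s)" by (rule notSM) (use qQ in blast)
      ultimately show False by simp
    next
      case iNR: False
      then have iL: "frequently (\<lambda>s. \<phi> s \<in> X i) (at_left t)" using freq_split[OF freq[OF i(1)]] by blast
      have Lneg: "\<forall>s\<in>{t-e<..<t}. P s < 0"
      proof (rule ccontr)
        assume "\<not> ?thesis"
        then have "\<forall>s\<in>{t-e<..<t}. \<not> P s < 0" using Lsign by auto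
        then show False using freq_contra[OF iL c3iL evL] by blast
      qed
      have jR: "frequently (\<lambda>s. \<phi> s \<in> X j) (at_right t)"
      proof (rule ccontr)
        assume "\<not> ?thesis"
        then have jL: "frequently (\<lambda>s. \<phi> s \<in> X j) (at_left t)" using freq_split[OF freq[OF j(1)]] by blast
        have "\<forall>s\<in>{t-e<..<t}. \<not> P s > 0" using Lneg by auto
        then show False using freq_contra[OF jL c3jL evL] by blast
      qed
      have Rpos: "\<forall>s\<in>{t<..<t+e}. P s > 0"
      proof (rule ccontr)
        assume "\<not> ?thesis"
        then have "\<forall>s\<in>{t<..<t+e}. \<not> P s > 0" using Rsign by auto
        then show False using freq_contra[OF jR c3jR evR] by blast
      qed
      have "eventually (\<lambda>s. - (F s - q * s) < - (F t - q * t)) (at t)"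
        unfolding eventually_at
      proof (intro exI[of _ e] conjI ballI impI)
        show "e > 0" by (rule e(1))
        fix s assume "s \<in> UNIV" and s: "s \<noteq> t \<and> dist s t < e"
        show "- (F s - q * s) < - (F t - q * t)"
        proof (cases "s > t")
          case True
          then have "P s > 0" using Rpos s by (auto simp: dist_real_def)
          then have "F s - F t > q * (s - t)" using dq3[OF True] unfolding P_def by blast
          then show ?thesis by (simp add: algebra_simps)
        next
          case False
          then have st: "s < t" using s by auto
          then have "P s < 0" using Lneg s by (auto simp: dist_real_def)
          then have "F s - F t > q * (s - t)" using dq4[OF st] unfolding P_def by blast
          then show ?thesis by (simp add: algebra_simps)
        qed
      qed
      then have "t \<in> SM (\<lambda>s. - (F s - q * s))" unfolding SM_def by simp
      moreover have "t \<notin> SM (\<lambda>s. - (F s - q * s))" by (rule notSM) (use qQ in blast)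
      ultimately show False by simp
    qed
  qed
  have "{t \<in> space lborel. \<not> (0 \<le> t \<longrightarrow> (\<forall>d. (\<phi> has_vector_derivative d) (at t) \<longrightarrow>
              (\<exists>a. \<forall>v\<in>clarke_grad V (\<phi> t). v \<bullet> d = a)))} \<subseteq> N"
    using main by blast
  then show ?thesis by (rule AE_I'[OF countable_imp_null_set_lborel[OF cN]])
qed
theorem lemma4:
  fixes K :: nat and X Op :: "nat \<Rightarrow> 'a::euclidean_space set" and V :: "'a \<Rightarrow> real"
  assumes "proper_partition K X Op"
    and "piecewise_C1 K X Op V"
  shows "nonpathological V"
proof -
  have fin: "finite {1..K}" by simp
  have cl: "\<And>i. i\<in>{1..K} \<Longrightarrow> closed (X i)" and op: "\<And>i. i\<in>{1..K} \<Longrightarrow> open (Op i)"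
    and cover: "(\<Union>i\<in>{1..K}. X i) = UNIV" and sub: "\<And>i. i\<in>{1..K} \<Longrightarrow> X i \<subseteq> Op i"
    using assms(1) unfolding proper_partition_def by blast+
  have cV: "continuous_on UNIV V" using assms(2) unfolding piecewise_C1_def by blast
  obtain Vs where Vs: "\<forall>i\<in>{1..K}. C1_on (Op i) (Vs i) \<and> (\<forall>x\<in>X i. V x = Vs i x)"
    using assms(2) unfolding piecewise_C1_def by blast
  have "\<forall>i\<in>{1..K}. \<exists>Di. (\<forall>x\<in>Op i. (Vs i has_derivative (\<lambda>h. Di x \<bullet> h)) (at x)) \<and> continuous_on (Op i) Di"
    using Vs unfolding C1_on_def by blast
  from bchoice[OF this] obtain D where
    D: "\<forall>i\<in>{1..K}. (\<forall>x\<in>Op i. (Vs i has_derivative (\<lambda>h. D i x \<bullet> h)) (at x)) \<and> continuous_on (Op i) (D i)"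
    by (rule exE)
  have eq: "\<And>i x. i\<in>{1..K} \<Longrightarrow> x\<in>X i \<Longrightarrow> V x = Vs i x" using Vs by blast
  have der: "\<And>i x. i\<in>{1..K} \<Longrightarrow> x\<in>Op i \<Longrightarrow> (Vs i has_derivative (\<lambda>h. D i x \<bullet> h)) (at x)"
    using D by blast
  have cont: "\<And>i. i\<in>{1..K} \<Longrightarrow> continuous_on (Op i) (D i)" using D by blast
  show ?thesis unfolding nonpathological_def
  proof (intro conjI allI impI)
    show "locally_lipschitz V"
      by (rule loc_lip[where X=X and Op=Op and Vs=Vs and D=D and V=V and I="{1..K}"])
        (fact fin, erule cl, erule op, fact cover, erule sub, erule (1) eq, erule (1) der, erule cont)
    fix \<phi> :: "real \<Rightarrow> 'a" assume ac: "abs_cont_Rplus \<phi>"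
    have cphi: "continuous_on {0<..} \<phi>" by (rule ac_cont[OF ac])
    show "AE t in lborel. 0 \<le> t \<longrightarrow> (\<forall>d. (\<phi> has_vector_derivative d) (at t) \<longrightarrow>
              (\<exists>a. \<forall>v\<in>clarke_grad V (\<phi> t). v \<bullet> d = a))"
      by (rule ae_part[where X=X and Op=Op and Vs=Vs and D=D and V=V and I="{1..K}"])
        (fact fin, erule cl, erule op, fact cover, erule sub, erule (1) eq, erule (1) der, erule cont, fact cV, fact cphi)
  qed
qed

end
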